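(* Let $t=\lceil\frac{n-\kappa}{2}\rceil$ and write $\mathrm{Small}(x)=\mathrm{Small}_t(x)$. Suppose $\mathrm{Small}(u)$ exists and $v\in\mathrm{Side}_{\mathrm{Small}(u)}(u)$. Then $\mathrm{Small}(v)$ exists, $\mathrm{Side}_{\mathrm{Small}(v)}(v)\subseteq\mathrm{Side}_{\mathrm{Small}(u)}(u)$, and either $\mathrm{Small}(v)=\mathrm{Small}(u)$ or $\mathrm{Small}(v)\subseteq\mathrm{Small}(u)\cup\mathrm{Side}_{\mathrm{Small}(u)}(u)$ (i.e. $\mathrm{Small}(v)$ is a laminar cut of $\mathrm{Small}(u)$).
   Context: $G=(V,E)$ is a finite, simple, connected, undirected, non-complete graph with $n=|V|$; $\kappa$ is its vertex connectivity, assumed $\kappa<n/4$. A cut is a set $U\subset V$ whose removal disconnects $G$; a $\kappa$-cut is a cut of size $\kappa$; a side of $U$ is a connected component of the subgraph induced on $V\setminus U$; $\mathrm{Side}_U(x)$ is the side containing $x\notin U$. For a vertex $x$ and $t\le\lceil\frac{n-\kappa}{2}\rceil$, $\mathrm{Small}_t(x)$ denotes, when it exists, the unique $\kappa$-cut $Y$ with $x\notin Y$, $|\mathrm{Side}_Y(x)|\le t$, and $\mathrm{Side}_Y(x)\subseteq\mathrm{Side}_U(x)$ for every $\kappa$-cut $U$ with $x\notin U$ and $|\mathrm{Side}_U(x)|\le t$ (it exists iff some $\kappa$-cut $U$ with $x\notin U$ has $|\mathrm{Side}_U(x)|\le t$). *)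

theory Defs
  imports Main
begin

definition simple_graph :: "'a set \<Rightarrow> ('a \<Rightarrow> 'a \<Rightarrow> bool) \<Rightarrow> bool" where
  "simple_graph V E \<longleftrightarrow> finite V \<and> (\<forall>x y. E x y \<longrightarrow> x \<in> V \<and> y \<in> V)
     \<and> (\<forall>x y. E x y \<longrightarrow> E y x) \<and> (\<forall>x. \<not> E x x)"

definition reach :: "('a \<Rightarrow> 'a \<Rightarrow> bool) \<Rightarrow> 'a set \<Rightarrow> 'a \<Rightarrow> 'a \<Rightarrow> bool" where
  "reach E S x y \<longleftrightarrow> x \<in> S \<and> y \<in> S \<and> (\<lambda>a b. E a b \<and> a \<in> S \<and> b \<in> S)\<^sup>*\<^sup>* x y"

definition connected_graph :: "'a set \<Rightarrow> ('a \<Rightarrow> 'a \<Rightarrow> bool) \<Rightarrow> bool" where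
  "connected_graph V E \<longleftrightarrow> V \<noteq> {} \<and> (\<forall>x\<in>V. \<forall>y\<in>V. reach E V x y)"

definition complete_graph :: "'a set \<Rightarrow> ('a \<Rightarrow> 'a \<Rightarrow> bool) \<Rightarrow> bool" where
  "complete_graph V E \<longleftrightarrow> (\<forall>x\<in>V. \<forall>y\<in>V. x \<noteq> y \<longrightarrow> E x y)"

definition is_cut :: "'a set \<Rightarrow> ('a \<Rightarrow> 'a \<Rightarrow> bool) \<Rightarrow> 'a set \<Rightarrow> bool" where
  "is_cut V E U \<longleftrightarrow> U \<subseteq> V \<and> (\<exists>x\<in>V - U. \<exists>y\<in>V - U. \<not> reach E (V - U) x y)"

text \<open>Vertex connectivity (for non-complete graphs): minimum size of a cut.\<close>
definition kappa :: "'a set \<Rightarrow> ('a \<Rightarrow> 'a \<Rightarrow> bool) \<Rightarrow> nat" where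
  "kappa V E = (LEAST k. \<exists>U. is_cut V E U \<and> card U = k)"

definition kcut :: "'a set \<Rightarrow> ('a \<Rightarrow> 'a \<Rightarrow> bool) \<Rightarrow> 'a set \<Rightarrow> bool" where
  "kcut V E U \<longleftrightarrow> is_cut V E U \<and> card U = kappa V E"

definition side :: "'a set \<Rightarrow> ('a \<Rightarrow> 'a \<Rightarrow> bool) \<Rightarrow> 'a set \<Rightarrow> 'a \<Rightarrow> 'a set" where
  "side V E U x = {y. reach E (V - U) x y}"

definition is_small :: "'a set \<Rightarrow> ('a \<Rightarrow> 'a \<Rightarrow> bool) \<Rightarrow> nat \<Rightarrow> 'a \<Rightarrow> 'a set \<Rightarrow> bool" where
  "is_small V E t x Y \<longleftrightarrow> kcut V E Y \<and> x \<notin> Y \<and> card (side V E Y x) \<le> t \<and>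
     (\<forall>U. kcut V E U \<and> x \<notin> U \<and> card (side V E U x) \<le> t \<longrightarrow> side V E Y x \<subseteq> side V E U x)"

definition small :: "'a set \<Rightarrow> ('a \<Rightarrow> 'a \<Rightarrow> bool) \<Rightarrow> nat \<Rightarrow> 'a \<Rightarrow> 'a set" where
  "small V E t x = (THE Y. is_small V E t x Y)"

definition small_exists :: "'a set \<Rightarrow> ('a \<Rightarrow> 'a \<Rightarrow> bool) \<Rightarrow> nat \<Rightarrow> 'a \<Rightarrow> bool" where
  "small_exists V E t x \<longleftrightarrow> (\<exists>Y. is_small V E t x Y)"

text \<open>t = ceil((n - kappa)/2), computed in nat (n > kappa here).\<close>
definition tval :: "'a set \<Rightarrow> ('a \<Rightarrow> 'a \<Rightarrow> bool) \<Rightarrow> nat" where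
  "tval V E = (card V - kappa V E + 1) div 2"

end

theory Submission
  imports Defs
begin

lemma reach_closed:
  assumes "reach E S x y" "x \<in> C" "C \<subseteq> S" "\<forall>a\<in>C. \<forall>b\<in>S. E a b \<longrightarrow> b \<in> C"
  shows "y \<in> C"
proof -
  from assms(1) have "(\<lambda>a b. E a b \<and> a \<in> S \<and> b \<in> S)\<^sup>*\<^sup>* x y" by (simp add: reach_def)
  then show ?thesis
    by (induction rule: rtranclp_induct) (use assms in auto)
qed

lemma side_closed: "a \<in> side V E U x \<Longrightarrow> b \<in> V - U \<Longrightarrow> E a b \<Longrightarrow> b \<in> side V E U x"
  unfolding side_def reach_def by (auto intro: rtranclp.rtrancl_into_rtrancl)

lemma side_sub: "side V E U x \<subseteq> V - U"
  by (auto simp: side_def reach_def)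

lemma side_self: "x \<in> V - U \<Longrightarrow> x \<in> side V E U x"
  by (auto simp: side_def reach_def)

lemma side_within:
  assumes "x \<in> C" "C \<subseteq> V - X" "\<forall>a\<in>C. \<forall>b\<in>V-X. E a b \<longrightarrow> b \<in> C"
  shows "side V E X x \<subseteq> C"
  using reach_closed[OF _ assms] unfolding side_def by blast

lemma sep_cut:
  assumes "X \<subseteq> V" "a \<in> C" "C \<subseteq> V - X" "b \<in> V - X" "b \<notin> C"
    "\<forall>c\<in>C. \<forall>y\<in>V-X. E c y \<longrightarrow> y \<in> C"
  shows "is_cut V E X"
proof -
  have "\<not> reach E (V - X) a b" using reach_closed[OF _ assms(2,3,6)] assms(5) by blast
  then show ?thesis unfolding is_cut_def using assms by blast
qed

lemma kappa_le: "is_cut V E X \<Longrightarrow> kappa V E \<le> card X"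
  unfolding kappa_def by (rule Least_le) blast

lemma card3: "finite A \<Longrightarrow> finite B \<Longrightarrow> finite C \<Longrightarrow> A\<inter>B={} \<Longrightarrow> A\<inter>C={} \<Longrightarrow> B\<inter>C={}
  \<Longrightarrow> card (A\<union>B\<union>C) = card A + card B + card C"
  by (simp add: card_Un_disjoint Int_Un_distrib2)

definition nb :: "'a set \<Rightarrow> ('a \<Rightarrow> 'a \<Rightarrow> bool) \<Rightarrow> 'a set \<Rightarrow> 'a set" where
  "nb V E A = {y \<in> V - A. \<exists>a\<in>A. E a y}"

lemma cut_nb:
  assumes G: "simple_graph V E" and k: "kcut V E Z" and x: "x \<in> V - Z"
    and c: "card (side V E Z x) \<le> t" and tk: "t + kappa V E < card V"
  shows "Z = nb V E (side V E Z x)"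
proof -
  define A where "A = side V E Z x"
  have fin: "finite V" using G by (simp add: simple_graph_def)
  have ZV: "Z \<subseteq> V" and cZ: "card Z = kappa V E" using k by (auto simp: kcut_def is_cut_def)
  have AV: "A \<subseteq> V - Z" using side_sub unfolding A_def by metis
  have sub: "nb V E A \<subseteq> Z"
  proof
    fix y assume "y \<in> nb V E A"
    then obtain a where "a \<in> A" "E a y" "y \<in> V" "y \<notin> A" by (auto simp: nb_def)
    then show "y \<in> Z" using side_closed[of a V E Z x y] unfolding A_def by blast
  qed
  have "card (nb V E A \<union> A) \<le> card (nb V E A) + card A" by (rule card_Un_le)
  also have "\<dots> \<le> card Z + t" using card_mono[OF finite_subset[OF ZV fin] sub] c A_def by simp
  finally have "card (nb V E A \<union> A) < card V" using cZ tk by simp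
  moreover have NV: "nb V E A \<union> A \<subseteq> V" using ZV sub AV by auto
  ultimately have "\<not> V \<subseteq> nb V E A \<union> A"
    using card_mono[OF finite_subset[OF NV fin]] by (meson leD)
  then obtain b where b: "b \<in> V" "b \<notin> nb V E A \<union> A" by blast
  have xA: "x \<in> A" unfolding A_def using side_self[OF x] .
  have "is_cut V E (nb V E A)"
    apply (rule sep_cut[of _ _ x A b])
    using ZV sub xA AV b by (auto simp: nb_def)
  then have "kappa V E \<le> card (nb V E A)" by (rule kappa_le)
  then have "card (nb V E A) = card Z" using cZ card_mono[OF finite_subset[OF ZV fin] sub] by simp
  then show ?thesis using card_subset_eq[OF finite_subset[OF ZV fin] sub] A_def by simp
qed

lemma small_unique:
  assumes G: "simple_graph V E" and tk: "t + kappa V E < card V"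
    and x: "x \<in> V" and Y1: "is_small V E t x Y1" and Y2: "is_small V E t x Y2"
  shows "Y1 = Y2"
proof -
  have "side V E Y1 x = side V E Y2 x" using Y1 Y2 unfolding is_small_def by blast
  moreover have "Y1 = nb V E (side V E Y1 x)"
    using cut_nb[OF G _ _ _ tk] Y1 x unfolding is_small_def by blast
  moreover have "Y2 = nb V E (side V E Y2 x)"
    using cut_nb[OF G _ _ _ tk] Y2 x unfolding is_small_def by blast
  ultimately show ?thesis by simp
qed

lemma small_is:
  assumes G: "simple_graph V E" and tk: "t + kappa V E < card V"
    and x: "x \<in> V" and e: "small_exists V E t x"
  shows "is_small V E t x (small V E t x)"
proof -
  obtain Y where Y: "is_small V E t x Y" using e by (auto simp: small_exists_def)
  show ?thesis unfolding small_def
    by (rule theI[of _ Y]) (use Y small_unique[OF G tk x] in blast)+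
qed

lemma uncross:
  assumes G: "simple_graph V E" and k1: "kcut V E U1" and k2: "kcut V E U2"
    and v1: "v \<in> V - U1" and v2: "v \<in> V - U2"
    and t1: "card (side V E U1 v) \<le> t" and t2: "card (side V E U2 v) \<le> t"
    and tt: "2*t + kappa V E \<le> card V + 1" and tk: "t + kappa V E < card V"
  shows "\<exists>X. kcut V E X \<and> v \<notin> X \<and> side V E X v \<subseteq> side V E U1 v \<inter> side V E U2 v"
proof -
  define A1 where "A1 = side V E U1 v"
  define A2 where "A2 = side V E U2 v"
  define B1 where "B1 = V - U1 - A1"
  define B2 where "B2 = V - U2 - A2"
  define X where "X = (A1\<inter>U2) \<union> (U1\<inter>U2) \<union> (U1\<inter>A2)"
  define X' where "X' = (B1\<inter>U2) \<union> (U1\<inter>U2) \<union> (U1\<inter>B2)"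
  have fin: "finite V" using G by (simp add: simple_graph_def)
  have sym: "\<And>a b. E a b \<Longrightarrow> E b a" and EV: "\<And>a b. E a b \<Longrightarrow> a\<in>V \<and> b \<in> V"
    using G by (auto simp: simple_graph_def)
  have U1V: "U1 \<subseteq> V" and cU1: "card U1 = kappa V E" using k1 by (auto simp: kcut_def is_cut_def)
  have U2V: "U2 \<subseteq> V" and cU2: "card U2 = kappa V E" using k2 by (auto simp: kcut_def is_cut_def)
  have A1V: "A1 \<subseteq> V - U1" using side_sub unfolding A1_def by metis
  have A2V: "A2 \<subseteq> V - U2" using side_sub unfolding A2_def by metis
  have vA: "v \<in> A1 \<inter> A2" using side_self[OF v1] side_self[OF v2] A1_def A2_def by blast
  have cl1: "\<And>a b. a \<in> A1 \<Longrightarrow> b \<in> V - U1 \<Longrightarrow> E a b \<Longrightarrow> b \<in> A1"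
    using side_closed unfolding A1_def by metis
  have cl2: "\<And>a b. a \<in> A2 \<Longrightarrow> b \<in> V - U2 \<Longrightarrow> E a b \<Longrightarrow> b \<in> A2"
    using side_closed unfolding A2_def by metis
  have clX: "\<forall>c\<in>A1\<inter>A2. \<forall>y\<in>V-X. E c y \<longrightarrow> y \<in> A1\<inter>A2"
  proof (intro ballI impI)
    fix c y assume c: "c \<in> A1\<inter>A2" and y: "y \<in> V - X" and e: "E c y"
    show "y \<in> A1\<inter>A2"
    proof (cases "y \<in> U1")
      case True
      then have "y \<notin> A2" "y \<notin> U2" using y X_def by auto
      moreover have "y \<in> A2" using cl2[of c y] c y e \<open>y \<notin> U2\<close> by blast
      ultimately show ?thesis by blast
    next
      case False
      then have "y \<in> A1" using cl1[of c y] c y e by blast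
      then have "y \<notin> U2" using y X_def by auto
      then have "y \<in> A2" using cl2[of c y] c y e by blast
      then show ?thesis using \<open>y \<in> A1\<close> by blast
    qed
  qed
  have fA1: "finite A1" using A1V fin finite_subset by blast
  have fA2: "finite A2" using A2V fin finite_subset by blast
  have fU1: "finite U1" using U1V fin finite_subset by blast
  have fU2: "finite U2" using U2V fin finite_subset by blast
  have fB1: "finite B1" using B1_def fin by simp
  have fB2: "finite B2" using B2_def fin by simp
  have cA1: "card A1 = card (A1\<inter>A2) + card (A1\<inter>U2) + card (A1\<inter>B2)"
  proof -
    have "A1 = (A1\<inter>A2) \<union> (A1\<inter>U2) \<union> (A1\<inter>B2)" using A1V B2_def by auto
    also have "card \<dots> = card (A1\<inter>A2) + card (A1\<inter>U2) + card (A1\<inter>B2)"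
      by (rule card3) (use fA1 A2V B2_def in auto)
    finally show ?thesis .
  qed
  have cA2: "card A2 = card (A1\<inter>A2) + card (U1\<inter>A2) + card (B1\<inter>A2)"
  proof -
    have "A2 = (A1\<inter>A2) \<union> (U1\<inter>A2) \<union> (B1\<inter>A2)" using A2V B1_def by auto
    also have "card \<dots> = card (A1\<inter>A2) + card (U1\<inter>A2) + card (B1\<inter>A2)"
      by (rule card3) (use fA2 A1V B1_def in auto)
    finally show ?thesis .
  qed
  have cU1': "card U1 = card (U1\<inter>A2) + card (U1\<inter>U2) + card (U1\<inter>B2)"
  proof -
    have "U1 = (U1\<inter>A2) \<union> (U1\<inter>U2) \<union> (U1\<inter>B2)" using U1V B2_def by auto
    also have "card \<dots> = card (U1\<inter>A2) + card (U1\<inter>U2) + card (U1\<inter>B2)"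
      by (rule card3) (use fU1 A2V B2_def in auto)
    finally show ?thesis .
  qed
  have cU2': "card U2 = card (A1\<inter>U2) + card (U1\<inter>U2) + card (B1\<inter>U2)"
  proof -
    have "U2 = (A1\<inter>U2) \<union> (U1\<inter>U2) \<union> (B1\<inter>U2)" using U2V B1_def by auto
    also have "card \<dots> = card (A1\<inter>U2) + card (U1\<inter>U2) + card (B1\<inter>U2)"
      by (rule card3) (use fU2 A1V B1_def in auto)
    finally show ?thesis .
  qed
  have cB1: "card B1 = card (B1\<inter>A2) + card (B1\<inter>U2) + card (B1\<inter>B2)"
  proof -
    have "B1 = (B1\<inter>A2) \<union> (B1\<inter>U2) \<union> (B1\<inter>B2)" using B1_def B2_def by auto
    also have "card \<dots> = card (B1\<inter>A2) + card (B1\<inter>U2) + card (B1\<inter>B2)"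
      by (rule card3) (use fB1 A2V B2_def in auto)
    finally show ?thesis .
  qed
  have cV: "card V = card A1 + card U1 + card B1"
  proof -
    have "V = A1 \<union> U1 \<union> B1" using A1V U1V B1_def by auto
    also have "card \<dots> = card A1 + card U1 + card B1"
      by (rule card3) (use fA1 fU1 fB1 A1V B1_def in auto)
    finally show ?thesis .
  qed
  have cX: "card X = card (A1\<inter>U2) + card (U1\<inter>U2) + card (U1\<inter>A2)"
    unfolding X_def by (rule card3) (use fA1 fU1 A1V A2V in auto)
  have cX': "card X' = card (B1\<inter>U2) + card (U1\<inter>U2) + card (U1\<inter>B2)"
    unfolding X'_def by (rule card3) (use fB1 fU1 B1_def B2_def in auto)
  have cAA: "card (A1\<inter>A2) \<ge> 1" using vA fA1 by (metis One_nat_def Suc_leI card_gt_0_iff empty_iff finite_Int)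
  have XV: "X \<subseteq> V" using U1V U2V X_def by auto
  have X'V: "X' \<subseteq> V" using U1V U2V X'_def by auto
  have cXle: "card X \<le> kappa V E"
  proof (cases "B1 \<inter> B2 = {}")
    case True
    then have "card (B1\<inter>B2) = 0" by simp
    then show ?thesis using cA1 cA2 cU1' cU2' cB1 cV cX cU1 cU2 t1 t2 tt cAA
      unfolding A1_def[symmetric] A2_def[symmetric] by linarith
  next
    case False
    then obtain w where w: "w \<in> B1 \<inter> B2" by blast
    have clB: "\<forall>c\<in>B1\<inter>B2. \<forall>y\<in>V-X'. E c y \<longrightarrow> y \<in> B1\<inter>B2"
    proof (intro ballI impI)
      fix c y assume c: "c \<in> B1\<inter>B2" and y: "y \<in> V - X'" and e: "E c y"
      have "y \<notin> A1"
      proof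
        assume "y \<in> A1" then have "c \<in> A1" using cl1[of y c] sym[OF e] c B1_def by blast
        then show False using c B1_def by blast
      qed
      moreover have "y \<notin> A2"
      proof
        assume "y \<in> A2" then have "c \<in> A2" using cl2[of y c] sym[OF e] c B2_def by blast
        then show False using c B2_def by blast
      qed
      moreover have "y \<in> V" "y \<notin> X'" using y by auto
      ultimately show "y \<in> B1\<inter>B2" unfolding X'_def B1_def B2_def by blast
    qed
    have h1: "B1\<inter>B2 \<subseteq> V - X'" unfolding X'_def B1_def B2_def by blast
    have h2: "v \<in> V - X'" using v1 v2 unfolding X'_def by blast
    have h3: "v \<notin> B1\<inter>B2" using vA unfolding B1_def by blast
    have "is_cut V E X'" by (rule sep_cut[OF X'V w h1 h2 h3 clB])
    then have "kappa V E \<le> card X'" by (rule kappa_le)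
    then show ?thesis using cX cX' cU1' cU2' cU1 cU2 by linarith
  qed
  have cAA2: "card (A1\<inter>A2) \<le> t" using t1 card_mono[OF fA1, of "A1\<inter>A2"] A1_def by auto
  have "card (X \<union> (A1\<inter>A2)) < card V"
    using card_Un_le[of X "A1\<inter>A2"] cXle cAA2 tk by linarith
  moreover have NV: "X \<union> (A1\<inter>A2) \<subseteq> V" using XV A1V by auto
  ultimately have "\<not> V \<subseteq> X \<union> (A1\<inter>A2)"
    using card_mono[OF finite_subset[OF NV fin]] by (meson leD)
  then obtain b where b: "b \<in> V" "b \<notin> X \<union> (A1\<inter>A2)" by blast
  have AX: "A1\<inter>A2 \<subseteq> V - X" using A1V A2V X_def by auto
  have "is_cut V E X"
  proof (rule sep_cut[OF XV vA AX _ _ clX])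
    show "b \<in> V - X" "b \<notin> A1\<inter>A2" using b by auto
  qed
  then have kX: "kcut V E X" using kappa_le[of V E X] cXle by (simp add: kcut_def)
  moreover have "v \<notin> X" using vA AX by blast
  moreover have "side V E X v \<subseteq> A1 \<inter> A2" by (rule side_within[OF vA AX clX])
  ultimately show ?thesis unfolding A1_def A2_def by blast
qed

theorem lemma6:
  fixes V :: "'a set" and E :: "'a \<Rightarrow> 'a \<Rightarrow> bool" and u v :: 'a
  assumes "simple_graph V E"
    and "connected_graph V E"
    and "\<not> complete_graph V E"
    and "4 * kappa V E < card V"
    and "u \<in> V"
    and "small_exists V E (tval V E) u"
    and "v \<in> side V E (small V E (tval V E) u) u"
  shows "small_exists V E (tval V E) v
    \<and> side V E (small V E (tval V E) v) v \<subseteq> side V E (small V E (tval V E) u) u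
    \<and> (small V E (tval V E) v = small V E (tval V E) u
       \<or> small V E (tval V E) v \<subseteq> small V E (tval V E) u \<union> side V E (small V E (tval V E) u) u)"
proof -
  note G = assms(1)
  define t where "t = tval V E"
  define Y where "Y = small V E t u"
  define S where "S = side V E Y u"
  have fin: "finite V" using G by (simp add: simple_graph_def)
  obtain Y0 where Y0: "is_small V E t u Y0" using assms(6) t_def by (auto simp: small_exists_def)
  have k1: "kappa V E \<ge> 1"
  proof (rule ccontr)
    assume "\<not> kappa V E \<ge> 1"
    then have "card Y0 = 0" using Y0 by (simp add: is_small_def kcut_def)
    moreover have "Y0 \<subseteq> V" using Y0 by (simp add: is_small_def kcut_def is_cut_def)
    ultimately have "Y0 = {}" using fin finite_subset card_0_eq by metis
    then show False using Y0 assms(2) by (auto simp: is_small_def kcut_def is_cut_def connected_graph_def)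
  qed
  have tk: "t + kappa V E < card V" using k1 assms(4) unfolding t_def tval_def by linarith
  have tt: "2*t + kappa V E \<le> card V + 1" using k1 assms(4) unfolding t_def tval_def by linarith
  have hY: "is_small V E t u Y" unfolding Y_def by (rule small_is[OF G tk assms(5)]) (use assms(6) t_def in simp)
  have vS: "v \<in> S" using assms(7) unfolding S_def Y_def t_def .
  have SV: "S \<subseteq> V - Y" unfolding S_def by (rule side_sub)
  have vV: "v \<in> V - Y" using vS SV by blast
  have SvS: "side V E Y v \<subseteq> S"
    by (rule side_within[OF vS SV]) (use side_closed S_def in metis)
  have fS: "finite S" using SV fin finite_subset by blast
  define P where "P = (\<lambda>U. kcut V E U \<and> v \<notin> U \<and> card (side V E U v) \<le> t)"
  have PY: "P Y" unfolding P_def using hY vV card_mono[OF fS SvS] S_def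
    by (auto simp: is_small_def)
  obtain U0 where U0: "P U0" and U0m: "\<And>U. P U \<Longrightarrow> card (side V E U0 v) \<le> card (side V E U v)"
    using ex_has_least_nat[of P Y "\<lambda>U. card (side V E U v)"] PY by blast
  have smallU0: "is_small V E t v U0"
    unfolding is_small_def
  proof (intro conjI allI impI)
    show "kcut V E U0" "v \<notin> U0" "card (side V E U0 v) \<le> t" using U0 P_def by auto
    fix U assume PU: "kcut V E U \<and> v \<notin> U \<and> card (side V E U v) \<le> t"
    have "v \<in> V" using vV by blast
    obtain X where X: "kcut V E X" "v \<notin> X" "side V E X v \<subseteq> side V E U0 v \<inter> side V E U v"
      using uncross[of V E U0 U v t, OF G _ _ _ _ _ _ tt tk] U0 PU \<open>v \<in> V\<close> unfolding P_def by blast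
    have fU0: "finite (side V E U0 v)" using side_sub[of V E U0 v] fin finite_subset by blast
    have "card (side V E X v) \<le> card (side V E U0 v)" using X(3) card_mono[OF fU0] by blast
    then have "P X" using X U0 unfolding P_def by auto
    then have "card (side V E U0 v) \<le> card (side V E X v)" by (rule U0m)
    then have "side V E X v = side V E U0 v" using card_subset_eq[OF fU0] X(3) by (metis le_inf_iff antisym card_mono fU0)
    then show "side V E U0 v \<subseteq> side V E U v" using X(3) by blast
  qed
  have ex: "small_exists V E t v" unfolding small_exists_def using smallU0 by blast
  define Z where "Z = small V E t v"
  have hZ: "is_small V E t v Z" unfolding Z_def by (rule small_is[OF G tk _ ex]) (use vV in blast)
  have p2: "side V E Z v \<subseteq> S" using hZ PY SvS unfolding is_small_def P_def by blast
  have "Z = nb V E (side V E Z v)"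
    by (rule cut_nb[OF G _ _ _ tk]) (use hZ vV in \<open>auto simp: is_small_def\<close>)
  moreover have "nb V E (side V E Z v) \<subseteq> Y \<union> S"
  proof
    fix y assume "y \<in> nb V E (side V E Z v)"
    then obtain a where a: "a \<in> S" "E a y" "y \<in> V" using p2 by (auto simp: nb_def)
    show "y \<in> Y \<union> S" using side_closed[of a V E Y u y] a S_def by blast
  qed
  ultimately have p3: "Z \<subseteq> Y \<union> S" by simp
  show ?thesis using ex p2 p3 unfolding Z_def Y_def S_def t_def by blast
qed

end
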